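(* Let $n\ge1$ and $0<\varphi<t<1$ with $nt$ an integer, and let $\mathrm{lE}_n(t|\varphi)=\min\left((t-\varphi)\sqrt{\frac{\pi n}{8\varphi(1-\varphi)}},1\right)$. Then $$-\log P_{\mathrm{X},n}(t|\varphi)\in-\log P_{\mathrm{CH},n}(t|\varphi)+\tfrac12\log n-\log\left(\frac{1-\varphi}{t-\varphi}\sqrt{\frac{t}{2\pi(1-t)}}\right)+\left[-\frac{\mathrm{lE}_n(t|\varphi)}{n(t-\varphi)},\ \frac{\varphi(1-\varphi)}{(t-\varphi)^2n}+\frac{1}{12nt(1-t)}\right].$$
   Context: Logarithms are natural. For an integer $n\ge1$, $0<\varphi<1$ and $t\in[0,1]$ with $nt$ an integer: $P_{\mathrm{X},n}(t|\varphi)=\sum_{k\ge nt}\binom{n}{k}\varphi^k(1-\varphi)^{n-k}$; $P_{\mathrm{CH},n}(t|\varphi)=\left(\frac{\varphi}{t}\right)^{nt}\left(\frac{1-\varphi}{1-t}\right)^{n(1-t)}$ if $t\ge\varphi$, and $=1$ otherwise. Interval notation: $x\in y+[u,v]$ means $y+u\le x\le y+v$. *)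

theory Defs
  imports Complex_Main
begin

definition P_X :: "nat \<Rightarrow> real \<Rightarrow> real \<Rightarrow> real" where
  "P_X n t \<phi> = (\<Sum>j\<in>{j. j \<le> n \<and> real j \<ge> real n * t}.
      real (n choose j) * \<phi> ^ j * (1 - \<phi>) ^ (n - j))"

definition P_CH :: "nat \<Rightarrow> real \<Rightarrow> real \<Rightarrow> real" where
  "P_CH n t \<phi> = (if t \<ge> \<phi> then
      (\<phi> / t) powr (real n * t) * ((1 - \<phi>) / (1 - t)) powr (real n * (1 - t))
    else 1)"

definition lE :: "nat \<Rightarrow> real \<Rightarrow> real \<Rightarrow> real" where
  "lE n t \<phi> = min ((t - \<phi>) * sqrt (pi * real n / (8 * \<phi> * (1 - \<phi>)))) 1"

end

theory Submission
  imports Defs "HOL-Analysis.Analysis" "HOL-Real_Asymp.Real_Asymp"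
begin

lemma lnq_lower:
  fixes x :: real assumes "0 \<le> x" "x < 1"
  shows "2*x \<le> ln (1+x) - ln (1-x)"
proof -
  let ?g = "\<lambda>y::real. ln (1+y) - ln (1-y) - 2*y"
  have "?g 0 \<le> ?g x"
  proof (rule DERIV_nonneg_imp_nondecreasing[OF assms(1)])
    fix y :: real assume y: "0 \<le> y" "y \<le> x"
    hence y1: "y < 1" using assms by auto
    have "(?g has_real_derivative (1/(1+y) + 1/(1-y) - 2)) (at y)"
      using y y1 by (auto intro!: derivative_eq_intros)
    moreover have "1/(1+y) + 1/(1-y) - 2 \<ge> 0"
    proof -
      have "1/(1+y) + 1/(1-y) - 2 = 2*y^2/((1+y)*(1-y))"
      proof -
        have "y*y \<le> 1*y" by (rule mult_right_mono) (use y1 y in auto)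
        hence "1 - y*y \<noteq> 0" using y1 by auto
        thus ?thesis using y y1 by (simp add: field_simps power2_eq_square)
      qed
      thus ?thesis using y y1 by simp
    qed
    ultimately show "\<exists>d. (?g has_real_derivative d) (at y) \<and> 0 \<le> d" by blast
  qed
  thus ?thesis by simp
qed

lemma lnq_upper:
  fixes x :: real assumes "0 \<le> x" "x < 1"
  shows "ln (1+x) - ln (1-x) \<le> 2*x + 2/3 * x^3/(1-x^2)"
proof -
  let ?g = "\<lambda>y::real. 2*y + 2/3 * y^3/(1-y^2) - (ln (1+y) - ln (1-y))"
  have "?g 0 \<le> ?g x"
  proof (rule DERIV_nonneg_imp_nondecreasing[OF assms(1)])
    fix y :: real assume y: "0 \<le> y" "y \<le> x"
    hence y1: "y < 1" using assms by auto
    have p: "1 - y^2 > 0" using y y1 by (simp add: abs_square_less_1)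
    have ne: "1 - y^2 \<noteq> 0" using p by simp
    have "(?g has_real_derivative (4/3*y^4/(1-y^2)^2)) (at y)"
    proof (rule DERIV_cong)
      have d1: "((\<lambda>y. ln (1+y)) has_real_derivative 1/(1+y)) (at y)"
        using y y1 by (auto intro!: derivative_eq_intros)
      have d2: "((\<lambda>y. ln (1-y)) has_real_derivative -1/(1-y)) (at y)"
        using y y1 by (auto intro!: derivative_eq_intros)
      have d3: "((\<lambda>y. y^3) has_real_derivative 3*y^2) (at y)"
        by (auto intro!: derivative_eq_intros)
      have d4: "((\<lambda>y. 1-y^2) has_real_derivative -(2*y)) (at y)"
        by (auto intro!: derivative_eq_intros)
      have d5: "((\<lambda>y. y^3/(1-y^2)) has_real_derivative ((3*y^2)*(1-y^2) - y^3*(-(2*y)))/((1-y^2)*(1-y^2))) (at y)"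
        by (rule DERIV_divide[OF d3 d4 ne])
      have d6: "((\<lambda>y. 2*y + 2/3*(y^3/(1-y^2)) - (ln (1+y) - ln (1-y))) has_real_derivative
          2*1 + 2/3*(((3*y^2)*(1-y^2) - y^3*(-(2*y)))/((1-y^2)*(1-y^2))) - (1/(1+y) - -1/(1-y))) (at y)"
        by (intro DERIV_diff DERIV_add DERIV_cmult d1 d2 d5 DERIV_ident)
      show "(?g has_real_derivative
          2*1 + 2/3*(((3*y^2)*(1-y^2) - y^3*(-(2*y)))/((1-y^2)*(1-y^2))) - (1/(1+y) - -1/(1-y))) (at y)"
        using d6 by simp
      have q: "(1+y)*(1-y) = 1-y^2" by (simp add: power2_eq_square algebra_simps)
      have h1: "1/(1+y) - -1/(1-y) = 2/(1-y^2)" using y y1 q[symmetric] by (simp add: field_simps)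
      show "2*1 + 2/3*(((3*y^2)*(1-y^2) - y^3*(-(2*y)))/((1-y^2)*(1-y^2))) - (1/(1+y) - -1/(1-y)) = 4/3*y^4/(1-y^2)^2"
      proof -
        have gen: "\<And>u w::real. w = 1 - u \<Longrightarrow> w \<noteq> 0 \<Longrightarrow> 2*1 + 2/3*((3*u*w + 2*u^2)/(w*w)) - 2/w = 4/3*u^2/w^2"
          by (simp add: field_simps power2_eq_square) (metis distrib_right mult_1)
        have r: "(3*y^2)*(1-y^2) - y^3*(-(2*y)) = 3*y^2*(1-y^2) + 2*(y^2)^2"
          by (simp add: algebra_simps power2_eq_square power3_eq_cube)
        have r2: "y^4 = (y^2)^2" by simp
        show ?thesis unfolding h1 r r2 by (rule gen[OF refl ne])
      qed
    qed
    moreover have "4/3*y^4/(1-y^2)^2 \<ge> 0" by simp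
    ultimately show "\<exists>d. (?g has_real_derivative d) (at y) \<and> 0 \<le> d" by blast
  qed
  thus ?thesis by simp
qed

definition Dst :: "nat \<Rightarrow> real" where
  "Dst n = ln (fact n) - (real n + 1/2) * ln (real n) + real n"

lemma Dst_step: assumes "n \<ge> 1"
  shows "Dst n - Dst (Suc n) = (real n + 1/2) * (ln (real n + 1) - ln (real n)) - 1"
proof -
  have "ln (fact (Suc n) :: real) = ln (fact n) + ln (real n + 1)"
    by (simp add: ln_mult add.commute)
  thus ?thesis unfolding Dst_def by (simp add: algebra_simps)
qed

lemma Dst_step_bounds: assumes "n \<ge> 1"
  shows "0 \<le> Dst n - Dst (Suc n)" "Dst n - Dst (Suc n) \<le> 1/(12*real n) - 1/(12*(real n + 1))"
proof -
  have np: "real n > 0" using assms by simp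
  define x :: real where "x = 1/(2*real n+1)"
  have x0: "0 \<le> x" "x < 1" using assms by (auto simp: x_def field_simps)
  have e1: "1 + x = (2*real n + 2)/(2*real n+1)" using np by (simp add: x_def field_simps)
  have e2: "1 - x = (2*real n)/(2*real n+1)" using np by (simp add: x_def field_simps)
  have "ln (1+x) - ln (1-x) = ln (real n + 1) - ln (real n)"
  proof -
    have q: "(1+x)/(1-x) = (real n+1)/real n" unfolding e1 e2 using np by (auto simp: divide_simps)
    have "ln (1+x) - ln (1-x) = ln ((1+x)/(1-x))" using x0 by (simp add: ln_div)
    also have "\<dots> = ln (real n + 1) - ln (real n)" unfolding q using assms by (simp add: ln_div)
    finally show ?thesis .
  qed
  hence L: "2*x \<le> ln (real n + 1) - ln (real n)"
     "ln (real n + 1) - ln (real n) \<le> 2*x + 2/3 * x^3/(1-x^2)"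
    using lnq_lower[OF x0] lnq_upper[OF x0] by auto
  have h: "real n + 1/2 = 1/(2*x)" using np by (simp add: x_def field_simps)
  have hp: "real n + 1/2 > 0" by simp
  have "(real n + 1/2) * (2*x) = 1" using np by (simp add: x_def field_simps)
  moreover have "(real n + 1/2) * (2*x) \<le> (real n + 1/2) * (ln (real n + 1) - ln (real n))"
    using L(1) hp by (intro mult_left_mono) auto
  ultimately show "0 \<le> Dst n - Dst (Suc n)" using Dst_step[OF assms] by linarith
  have "(real n + 1/2) * (ln (real n + 1) - ln (real n)) \<le> (real n + 1/2) * (2*x + 2/3 * x^3/(1-x^2))"
    using L(2) hp by (intro mult_left_mono) auto
  also have "(real n + 1/2) * (2*x + 2/3 * x^3/(1-x^2)) = 1 + 1/(12*real n) - 1/(12*(real n + 1))"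
  proof -
    have xp: "x > 0" using np by (simp add: x_def)
    have c: "1 - x^2 = 4*real n*(real n+1) * x^2" using np
      by (simp add: x_def power2_eq_square divide_simps) (simp add: algebra_simps)
    have a: "x^3/(1-x^2) = x/(4*real n*(real n+1))" unfolding c using xp np
      by (simp add: power2_eq_square power3_eq_cube)
    have b: "(real n + 1/2) * x = 1/2" using np by (simp add: x_def field_simps)
    have "(real n + 1/2) * (2*x + 2/3 * x^3/(1-x^2)) = 2*((real n + 1/2) * x) + 2/3*((real n + 1/2) * x)/(4*real n*(real n+1))"
    proof -
      have a': "2/3 * x^3/(1-x^2) = 2/3 * (x/(4*real n*(real n+1)))" by (subst a[symmetric]) simp
      have g: "\<And>D::real. (real n + 1/2) * (2*x + 2/3 * (x/D)) = 2*((real n + 1/2) * x) + 2/3*((real n + 1/2) * x)/D"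
        by (simp add: algebra_simps add_divide_distrib diff_divide_distrib)
      show ?thesis unfolding a' by (rule g)
    qed
    also have "\<dots> = 1 + 1/(12*real n) - 1/(12*(real n + 1))"
    proof -
      have e1: "1/(12*real n) - 1/(12*(real n + 1)) = 1/(12*(real n*(real n+1)))" using np by (simp add: divide_simps)
      have e2: "2/3*(1/2)/(4*real n*(real n+1)) = 1/(12*(real n*(real n+1)))" by simp
      show ?thesis unfolding b using e1 e2 by simp
    qed
    finally show ?thesis .
  qed
  finally show "Dst n - Dst (Suc n) \<le> 1/(12*real n) - 1/(12*(real n + 1))" using Dst_step[OF assms] by linarith
qed

lemma wallis_closed:
  "(\<Prod>k=1..n. (4*real k^2) / (4*real k^2 - 1)) = (2^n * fact n)^4 / ((fact (2*n))^2 * (2*real n+1))"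
proof (induction n)
  case 0 then show ?case by simp
next
  case (Suc n)
  have f2: "(fact (2*Suc n) :: real) = fact (2*n) * ((2*real n+1)*(2*real n+2))"
    by (simp add: algebra_simps)
  have ne: "4*(real n+1)^2 - 1 = (2*real n+1)*(2*real n+3)" by (simp add: algebra_simps power2_eq_square)
  have "(\<Prod>k=1..Suc n. (4*real k^2) / (4*real k^2 - 1)) = (\<Prod>k=1..n. (4*real k^2) / (4*real k^2 - 1)) * ((4*(real n+1)^2) / (4*(real n+1)^2 - 1))"
    by (simp add: add.commute)
  also have "\<dots> = (2^n * fact n)^4 / ((fact (2*n))^2 * (2*real n+1)) * ((4*(real n+1)^2) / ((2*real n+1)*(2*real n+3)))"
    using Suc by (simp add: ne)
  also have "\<dots> = (2^Suc n * fact (Suc n))^4 / ((fact (2*Suc n))^2 * (2*real (Suc n)+1))"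
  proof -
    define k :: real where "k = 4*(real n+1)^2"
    have k0: "k \<noteq> 0" by (simp add: k_def)
    have e: "(2^Suc n * fact (Suc n))^4 = ((2^n * fact n)^4 * (4*(real n+1)^2)) * k"
      by (simp add: k_def power2_eq_square power4_eq_xxxx algebra_simps)
    have f: "(fact (2*Suc n))^2 * (2*real (Suc n)+1) = (((fact (2*n))^2 * (2*real n+1)) * ((2*real n+1)*(2*real n+3))) * k"
      unfolding f2 by (simp add: k_def power2_eq_square algebra_simps)
    show ?thesis unfolding e f using k0 by simp
  qed
  finally show ?case .
qed

lemma Dst_conv: obtains D where "(\<lambda>i. Dst (Suc i)) \<longlonglongrightarrow> D"
  "\<And>i. D \<le> Dst (Suc i)" "\<And>i. Dst (Suc i) - 1/(12*real (Suc i)) \<le> D"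
proof -
  let ?X = "\<lambda>i. Dst (Suc i)"
  let ?Y = "\<lambda>i. Dst (Suc i) - 1/(12*real (Suc i))"
  have dX: "decseq ?X"
    by (rule decseq_SucI) (use Dst_step_bounds(1)[of "Suc _"] in auto)
  have iY: "incseq ?Y"
  proof (rule incseq_SucI)
    fix i
    have "Dst (Suc i) - Dst (Suc (Suc i)) \<le> 1/(12*real (Suc i)) - 1/(12*(real (Suc i) + 1))"
      by (rule Dst_step_bounds(2)) simp
    thus "?Y i \<le> ?Y (Suc i)" by (simp add: add.commute)
  qed
  have YX: "?Y i \<le> ?X i" for i by simp
  have lb: "\<forall>i. ?Y 0 \<le> ?X i"
  proof
    fix i
    have "?Y 0 \<le> ?Y i" using iY unfolding incseq_def by blast
    thus "?Y 0 \<le> ?X i" using YX[of i] by linarith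
  qed
  obtain D where D: "?X \<longlonglongrightarrow> D" "\<forall>i. D \<le> ?X i" using decseq_convergent[OF dX lb] by blast
  have "(\<lambda>i. 1/(12*real (Suc i))) \<longlonglongrightarrow> 0" by real_asymp
  hence "?Y \<longlonglongrightarrow> D - 0" by (intro tendsto_diff D(1))
  hence "?Y i \<le> D" for i using incseq_le[OF iY] by simp
  thus ?thesis using D by (intro that[of D]) auto
qed

lemma ln_wallis: assumes "n \<ge> 1"
  shows "ln (\<Prod>k=1..n. (4*real k^2) / (4*real k^2 - 1)) = 4*Dst n - 2*Dst (2*n) + ln (real n) - ln 2 - ln (2*real n+1)"
proof -
  have np: "real n > 0" using assms by simp
  have l1: "ln (fact n :: real) = Dst n + (real n + 1/2) * ln (real n) - real n" by (simp add: Dst_def)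
  have l2: "ln (fact (2*n) :: real) = Dst (2*n) + (2*real n + 1/2) * (ln 2 + ln (real n)) - 2*real n"
    using np by (simp add: Dst_def ln_mult)
  have fp: "(fact n :: real) > 0" "(fact (2*n) :: real) > 0" by auto
  have "ln ((2^n * fact n)^4 / ((fact (2*n))^2 * (2*real n+1)) :: real)
     = 4*(real n * ln 2 + ln (fact n)) - (2 * ln (fact (2*n)) + ln (2*real n+1))"
  proof -
    have p1: "(2^n * fact n :: real) > 0" "(fact (2*n))^2 * (2*real n+1) > 0" using fp by auto
    have "ln ((2^n * fact n)^4 / ((fact (2*n))^2 * (2*real n+1)) :: real)
       = ln ((2^n * fact n)^4) - ln ((fact (2*n))^2 * (2*real n+1) :: real)"
      using p1 by (simp add: ln_div)
    also have "ln ((2^n * fact n)^4 :: real) = 4 * ln (2^n * fact n :: real)"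
      using p1 by (simp add: ln_realpow)
    also have "ln (2^n * fact n :: real) = ln (2^n) + ln (fact n)"
      using fp by (intro ln_mult_pos) auto
    also have "ln (2^n :: real) = real n * ln 2" by (simp add: ln_realpow)
    also have "ln ((fact (2*n))^2 * (2*real n+1) :: real) = ln ((fact (2*n))^2) + ln (2*real n+1)"
      using fp by (intro ln_mult_pos) auto
    also have "ln ((fact (2*n))^2 :: real) = 2 * ln (fact (2*n))"
      using fp by (simp add: ln_realpow)
    finally show ?thesis by simp
  qed
  also have "\<dots> = 4*Dst n - 2*Dst (2*n) + ln (real n) - ln 2 - ln (2*real n+1)"
    unfolding l1 l2 by (simp add: algebra_simps ln_mult)
  finally show ?thesis by (simp only: wallis_closed)
qed

lemma stirling_const: obtains D where "(\<lambda>i. Dst (Suc i)) \<longlonglongrightarrow> D"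
  "\<And>i. D \<le> Dst (Suc i)" "\<And>i. Dst (Suc i) - 1/(12*real (Suc i)) \<le> D" "D = ln (2*pi)/2"
proof -
  obtain D where D: "(\<lambda>i. Dst (Suc i)) \<longlonglongrightarrow> D"
    "\<And>i. D \<le> Dst (Suc i)" "\<And>i. Dst (Suc i) - 1/(12*real (Suc i)) \<le> D" using Dst_conv by blast
  have D1: "Dst \<longlonglongrightarrow> D" using D(1) by (rule LIMSEQ_imp_Suc)
  have D2: "(\<lambda>n. Dst (2*n)) \<longlonglongrightarrow> D"
    by (rule filterlim_compose[OF D1]) (simp add: filterlim_subseq strict_mono_def)
  have lq: "(\<lambda>n. ln (real n) - ln (2*real n+1)) \<longlonglongrightarrow> (- ln 2)" by real_asymp
  have "(\<lambda>n. 4*Dst n - 2*Dst (2*n) + (ln (real n) - ln (2*real n+1)) - ln 2) \<longlonglongrightarrow> 4*D - 2*D + (- ln 2) - ln 2"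
    by (intro tendsto_diff tendsto_add tendsto_mult_left D1 D2 lq tendsto_const)
  moreover have "eventually (\<lambda>n. 4*Dst n - 2*Dst (2*n) + (ln (real n) - ln (2*real n+1)) - ln 2 =
     ln (\<Prod>k=1..n. (4*real k^2) / (4*real k^2 - 1))) sequentially"
    using eventually_ge_at_top[of "1::nat"]
  proof eventually_elim
    case (elim n) show ?case using ln_wallis[OF elim] by linarith
  qed
  ultimately have A: "(\<lambda>n. ln (\<Prod>k=1..n. (4*real k^2) / (4*real k^2 - 1))) \<longlonglongrightarrow> 4*D - 2*D + (- ln 2) - ln 2"
    by (rule Lim_transform_eventually)
  have B: "(\<lambda>n. ln (\<Prod>k=1..n. (4*real k^2) / (4*real k^2 - 1))) \<longlonglongrightarrow> ln (pi/2)"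
    by (intro tendsto_ln wallis) simp
  have "4*D - 2*D + (- ln 2) - ln 2 = ln (pi/2)" using LIMSEQ_unique[OF A B] .
  hence "D = ln (2*pi)/2" by (simp add: ln_div ln_mult)
  thus ?thesis by (intro that[of D] D)
qed

lemma stirling_ln: assumes "n \<ge> 1"
  shows "ln (fact n) = ln (2*pi)/2 + (real n + 1/2) * ln (real n) - real n + (Dst n - ln (2*pi)/2)"
    "0 \<le> Dst n - ln (2*pi)/2" "Dst n - ln (2*pi)/2 \<le> 1/(12*real n)"
proof -
  obtain D where D: "\<And>i. D \<le> Dst (Suc i)" "\<And>i. Dst (Suc i) - 1/(12*real (Suc i)) \<le> D" "D = ln (2*pi)/2"
    using stirling_const by blast
  obtain i where i: "n = Suc i" using assms by (cases n) auto
  show "ln (fact n) = ln (2*pi)/2 + (real n + 1/2) * ln (real n) - real n + (Dst n - ln (2*pi)/2)"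
    by (simp add: Dst_def)
  show "0 \<le> Dst n - ln (2*pi)/2" using D(1)[of i] D(3) i by simp
  show "Dst n - ln (2*pi)/2 \<le> 1/(12*real n)" using D(2)[of i] D(3) i by simp
qed

definition bp :: "nat \<Rightarrow> real \<Rightarrow> nat \<Rightarrow> real" where
  "bp n f j = real (n choose j) * f ^ j * (1 - f) ^ (n - j)"

lemma bp_step: assumes "k < n"
  shows "(real k + 1) * (1 - f) * bp n f (Suc k) = (real n - real k) * f * bp n f k"
proof -
  have c: "real (Suc k) * real (n choose Suc k) = (real n - real k) * real (n choose k)"
  proof -
    have "Suc k * (n choose Suc k) = (n - k) * (n choose k)"
      by (metis binomial_absorb_comp binomial_absorption mult.commute)
    hence "real (Suc k * (n choose Suc k)) = real ((n - k) * (n choose k))" by simp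
    thus ?thesis using assms by (simp add: of_nat_diff algebra_simps)
  qed
  have e: "n - k = Suc (n - Suc k)" using assms by simp
  define A where "A = real (n choose Suc k)"
  define B where "B = real (n choose k)"
  define P where "P = f ^ k"
  define Q where "Q = (1 - f) ^ (n - Suc k)"
  have c': "(real k + 1) * A = (real n - real k) * B" using c unfolding A_def B_def by (simp add: add.commute)
  have "(real k + 1) * (1 - f) * bp n f (Suc k) = ((real k + 1) * A) * ((1-f)*f*P*Q)"
    unfolding bp_def A_def P_def Q_def by (simp add: mult_ac)
  also have "\<dots> = ((real n - real k) * B) * ((1-f)*f*P*Q)" unfolding c' ..
  also have "\<dots> = (real n - real k) * f * bp n f k"
    unfolding bp_def B_def P_def Q_def e by (simp add: mult_ac)
  finally show ?thesis .
qed

lemma tail_ids: assumes "k \<le> n"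
  shows "(\<Sum>j=k..n. (real j - real n * f) * bp n f j) = real k * (1 - f) * bp n f k
       \<and> (\<Sum>j=k..n. (real j - real n * f)^2 * bp n f j) =
            real n * f * (1 - f) * (\<Sum>j=k..n. bp n f j) + (real k - real n * f - f) * (real k * (1 - f) * bp n f k)"
  using assms
proof (induction k rule: inc_induct)
  case base
  have "bp n f n = f ^ n" by (simp add: bp_def)
  then show ?case by (simp add: power2_eq_square algebra_simps)
next
  case (step k)
  have st: "real (Suc k) * (1 - f) * bp n f (Suc k) = (real n - real k) * f * bp n f k"
    using bp_step[OF step(2)] by (simp add: add.commute)
  have s1: "(\<Sum>j=k..n. (real j - real n * f) * bp n f j) = (real k - real n * f) * bp n f k + (\<Sum>j=Suc k..n. (real j - real n * f) * bp n f j)"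
    using step(2) by (simp add: sum.atLeast_Suc_atMost)
  have s2: "(\<Sum>j=k..n. (real j - real n * f)^2 * bp n f j) = (real k - real n * f)^2 * bp n f k + (\<Sum>j=Suc k..n. (real j - real n * f)^2 * bp n f j)"
    using step(2) by (simp add: sum.atLeast_Suc_atMost)
  have s3: "(\<Sum>j=k..n. bp n f j) = bp n f k + (\<Sum>j=Suc k..n. bp n f j)"
    using step(2) by (simp add: sum.atLeast_Suc_atMost)
  have IH1: "(\<Sum>j=Suc k..n. (real j - real n * f) * bp n f j) = real (Suc k) * (1 - f) * bp n f (Suc k)"
    using step(3) by blast
  have IH2: "(\<Sum>j=Suc k..n. (real j - real n * f)^2 * bp n f j) =
            real n * f * (1 - f) * (\<Sum>j=Suc k..n. bp n f j) + (real (Suc k) - real n * f - f) * (real (Suc k) * (1 - f) * bp n f (Suc k))"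
    using step(3) by blast
  show ?case
  proof
    show "(\<Sum>j=k..n. (real j - real n * f) * bp n f j) = real k * (1 - f) * bp n f k"
      unfolding s1 IH1 st by (simp add: algebra_simps)
    show "(\<Sum>j=k..n. (real j - real n * f)^2 * bp n f j) =
            real n * f * (1 - f) * (\<Sum>j=k..n. bp n f j) + (real k - real n * f - f) * (real k * (1 - f) * bp n f k)"
      unfolding s2 IH2 s3 st by (simp add: algebra_simps power2_eq_square)
  qed
qed

lemma cs_lower:
  fixes T A x s :: real
  assumes T: "T > 0" and A: "A > 0" and x: "x > 0" and s: "s \<ge> 0"
    and cs: "A^2 \<le> s * T^2 + x * A * T"
  shows "A * x / (x^2 + s) \<le> T"
proof (rule ccontr)
  assume "\<not> ?thesis"
  hence "T < A * x / (x^2 + s)" by simp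
  moreover have d: "x^2 + s > 0" using x s by (simp add: add_pos_nonneg)
  ultimately have lt: "T * (x^2 + s) < A * x" by (simp add: pos_less_divide_eq)
  define u where "u = A / T"
  define v where "v = u * x"
  have Au: "A = u * T" using T by (simp add: u_def)
  have up: "u > 0" using A T by (simp add: u_def)
  have "T * (x^2 + s) < T * v" using lt unfolding v_def Au by (simp add: algebra_simps)
  hence vgt: "v > x^2 + s" using T by simp
  have "u^2 \<le> s + x * u"
  proof -
    have "(u^2) * T^2 \<le> (s + x * u) * T^2" using cs unfolding Au by (simp add: algebra_simps power2_eq_square)
    thus ?thesis using T by simp
  qed
  hence "x^2 * u^2 \<le> x^2 * (s + x * u)" using x by (simp add: mult_left_mono)
  hence le: "v^2 - x^2 * v - s * x^2 \<le> 0" unfolding v_def by (simp add: algebra_simps power2_eq_square)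
  have "v^2 - x^2 * v - s * x^2 = (v - x^2 - s) * v + s * (v - x^2)" by (simp add: algebra_simps power2_eq_square)
  moreover have "(v - x^2 - s) * v > 0"
  proof -
    have "x^2 \<ge> 0" by simp
    hence "v > 0" using vgt s by linarith
    thus ?thesis using vgt by (intro mult_pos_pos) auto
  qed
  moreover have "s * (v - x^2) \<ge> 0" using vgt s by (intro mult_nonneg_nonneg) auto
  ultimately show False using le by linarith
qed

lemma cs_ineq:
  fixes g w :: "nat \<Rightarrow> real" and S :: "nat set"
  assumes "finite S" "\<And>j. j \<in> S \<Longrightarrow> w j \<ge> 0" and T: "(\<Sum>j\<in>S. w j) > 0"
  shows "(\<Sum>j\<in>S. g j * w j)^2 \<le> (\<Sum>j\<in>S. w j) * (\<Sum>j\<in>S. (g j)^2 * w j)"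
proof -
  define T where "T = (\<Sum>j\<in>S. w j)"
  define A where "A = (\<Sum>j\<in>S. g j * w j)"
  define B where "B = (\<Sum>j\<in>S. (g j)^2 * w j)"
  define l where "l = A / T"
  have "0 \<le> (\<Sum>j\<in>S. (g j - l)^2 * w j)" using assms(2) by (intro sum_nonneg) auto
  also have "\<dots> = B - 2 * l * A + l^2 * T"
    unfolding B_def A_def T_def
    by (simp add: power2_eq_square algebra_simps sum.distrib sum_subtractf sum_distrib_left)
  finally have "0 \<le> B - 2 * l * A + l^2 * T" .
  moreover have lT: "l * T = A" using T by (simp add: l_def T_def)
  moreover have "l^2 * T = l * A" by (metis lT mult.assoc power2_eq_square)
  ultimately have "0 \<le> B - l * A" by linarith
  hence "0 \<le> T * B - A^2" using T unfolding l_def T_def[symmetric]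
    by (simp add: power2_eq_square field_simps)
  thus ?thesis unfolding A_def B_def T_def by simp
qed

lemma stir_k: assumes "j \<ge> 1"
  obtains e where "ln (fact j) = ln 2/2 + ln pi/2 + real j * ln (real j) + ln (real j)/2 - real j + e"
    "0 \<le> e" "e \<le> 1/(12*real j)"
proof -
  have l2: "ln (2*pi) = ln 2 + ln pi" by (simp add: ln_mult)
  have h: "ln (2*pi)/2 = ln 2/2 + ln pi/2" unfolding l2 by (simp add: add_divide_distrib)
  show ?thesis
    using stirling_ln[OF assms] distrib_right[of "real j" "1/2" "ln (real j)"] unfolding h
    by (intro that[of "Dst j - (ln 2/2 + ln pi/2)"]) linarith+
qed

theorem mainTheorem9:
  fixes n :: nat and t \<phi> :: real
  assumes "n \<ge> 1" and "0 < \<phi>" and "\<phi> < t" and "t < 1"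
    and "real n * t \<in> \<int>"
  defines "C \<equiv> - ln (P_CH n t \<phi>) + ln (real n) / 2
      - ln ((1 - \<phi>) / (t - \<phi>) * sqrt (t / (2 * pi * (1 - t))))"
  shows "C - lE n t \<phi> / (real n * (t - \<phi>)) \<le> - ln (P_X n t \<phi>)
     \<and> - ln (P_X n t \<phi>) \<le> C + (\<phi> * (1 - \<phi>) / ((t - \<phi>)^2 * real n)
                               + 1 / (12 * real n * t * (1 - t)))"
proof -
  note n1 = assms(1) and phi0 = assms(2) and phit = assms(3) and t1 = assms(4)
  have np: "real n > 0" using n1 by simp
  have t0: "t > 0" using phi0 phit by simp
  obtain z :: int where z: "real n * t = of_int z" using assms(5) Ints_cases by blast
  have zp: "z > 0" using z np t0 by (metis mult_pos_pos of_int_0_less_iff)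
  define k where "k = nat z"
  have tk: "real n * t = real k" using z zp by (simp add: k_def)
  have k1: "k \<ge> 1" using zp k_def by simp
  have kn: "real k < real n" using tk np t1 by (metis mult.right_neutral mult_strict_left_mono)
  hence kn': "k < n" by simp
  define m where "m = n - k"
  have m1: "m \<ge> 1" using kn' m_def by simp
  have rm: "real m = real n - real k" using kn' m_def by (simp add: of_nat_diff)
  have tm: "real n * (1 - t) = real m" using tk rm by (simp add: algebra_simps)
  have kp: "real k > 0" "real m > 0" using k1 m1 by auto
  define x where "x = real k - real n * \<phi>"
  have xt: "x = real n * (t - \<phi>)" using tk by (simp add: x_def algebra_simps)
  have xp: "x > 0" using xt np phit by simp
  define s where "s = real n * \<phi> * (1 - \<phi>)"
  have sp: "s \<ge> 0" using np phi0 phit t1 by (simp add: s_def)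
  have phi1: "\<phi> < 1" using phit t1 by simp
  define T where "T = (\<Sum>j=k..n. bp n \<phi> j)"
  have setq: "{j. j \<le> n \<and> real j \<ge> real n * t} = {k..n}" unfolding tk by auto
  have PX: "P_X n t \<phi> = T" unfolding P_X_def T_def bp_def setq ..
  have bpnn: "bp n \<phi> j \<ge> 0" for j using phi0 phi1 by (simp add: bp_def)
  define a where "a = bp n \<phi> k"
  have ap: "a > 0" using phi0 phi1 kn' by (simp add: a_def bp_def)
  have aT: "a \<le> T" unfolding a_def T_def using kn' bpnn by (intro member_le_sum) auto
  have Tp: "T > 0" using ap aT by simp
  define A where "A = real k * (1 - \<phi>) * a"
  have Ap: "A > 0" using kp ap phi1 by (simp add: A_def)
  have ids: "(\<Sum>j=k..n. (real j - real n * \<phi>) * bp n \<phi> j) = A"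
     "(\<Sum>j=k..n. (real j - real n * \<phi>)^2 * bp n \<phi> j) = s * T + (x - \<phi>) * A"
    using tail_ids[of k n \<phi>] kn' unfolding A_def a_def s_def T_def x_def by auto
  have TU: "x * T \<le> A"
  proof -
    have "x * T = (\<Sum>j=k..n. x * bp n \<phi> j)" by (simp add: T_def sum_distrib_left)
    also have "\<dots> \<le> (\<Sum>j=k..n. (real j - real n * \<phi>) * bp n \<phi> j)"
      using bpnn by (intro sum_mono mult_right_mono) (auto simp: x_def)
    finally show ?thesis using ids(1) by simp
  qed
  have TL: "A * x / (x^2 + s) \<le> T"
  proof (rule cs_lower[OF Tp Ap xp sp])
    have "A^2 \<le> T * (s * T + (x - \<phi>) * A)"
      using cs_ineq[of "{k..n}" "bp n \<phi>" "\<lambda>j. real j - real n * \<phi>"] bpnn Tp ids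
      unfolding T_def by auto
    also have "\<dots> \<le> s * T^2 + x * A * T"
      using Tp Ap phi0 by (simp add: algebra_simps power2_eq_square)
    finally show "A^2 \<le> s * T^2 + x * A * T" .
  qed
  define Lp where "Lp = ln \<phi>"
  define Lq where "Lq = ln (1 - \<phi>)"
  define Lk where "Lk = ln (real k)"
  define Lm where "Lm = ln (real m)"
  define Ln where "Ln = ln (real n)"
  define Lx where "Lx = ln x"
  obtain ek where ek: "ln (fact k) = ln 2/2 + ln pi/2 + real k * Lk + Lk/2 - real k + ek" "0 \<le> ek" "ek \<le> 1/(12*real k)"
    using stir_k[OF k1] unfolding Lk_def by blast
  obtain em where em: "ln (fact m) = ln 2/2 + ln pi/2 + real m * Lm + Lm/2 - real m + em" "0 \<le> em" "em \<le> 1/(12*real m)"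
    using stir_k[OF m1] unfolding Lm_def by blast
  obtain en where en: "ln (fact n) = ln 2/2 + ln pi/2 + real n * Ln + Ln/2 - real n + en" "0 \<le> en" "en \<le> 1/(12*real n)"
    using stir_k[OF n1] unfolding Ln_def by blast
  have La: "ln a = ln (fact n) - ln (fact k) - ln (fact m) + real k * Lp + real m * Lq"
  proof -
    have b: "real (n choose k) = fact n / (fact k * fact m)"
      using kn' unfolding m_def by (simp add: binomial_fact)
    have fp: "(fact n :: real) > 0" "(fact k :: real) > 0" "(fact m :: real) > 0" by auto
    have "a = fact n / (fact k * fact m) * \<phi> ^ k * (1 - \<phi>) ^ m"
      unfolding a_def bp_def b m_def ..
    also have "ln \<dots> = ln (fact n / (fact k * fact m)) + ln (\<phi> ^ k) + ln ((1 - \<phi>) ^ m)"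
    proof -
      have F: "fact n / (fact k * fact m) > (0::real)" using fp by simp
      have "ln (fact n / (fact k * fact m) * \<phi> ^ k * (1 - \<phi>) ^ m) = ln (fact n / (fact k * fact m) * \<phi> ^ k) + ln ((1 - \<phi>) ^ m)"
        using F phi0 phi1 by (intro ln_mult_pos) auto
      also have "ln (fact n / (fact k * fact m) * \<phi> ^ k) = ln (fact n / (fact k * fact m)) + ln (\<phi> ^ k)"
        using F phi0 by (intro ln_mult_pos) auto
      finally show ?thesis .
    qed
    also have "ln (fact n / (fact k * fact m) :: real) = ln (fact n) - ln (fact k) - ln (fact m)"
      using fp by (simp add: ln_div ln_mult_pos)
    finally show ?thesis unfolding Lp_def Lq_def by (simp add: ln_realpow)
  qed
  have LA: "ln A = Lk + Lq + ln a"
    unfolding A_def Lk_def Lq_def using kp ap phi1 by (simp add: ln_mult_pos)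
  have LT: "ln (P_CH n t \<phi>) = real k * (Lp - Lk + Ln) + real m * (Lq - Lm + Ln)"
  proof -
    have q1: "\<phi> / t = \<phi> * real n / real k" unfolding tk[symmetric] using np by simp
    have q2: "(1 - \<phi>) / (1 - t) = (1 - \<phi>) * real n / real m" unfolding tm[symmetric] using np by simp
    have p1: "\<phi> / t > 0" "(1 - \<phi>) / (1 - t) > 0" using phi0 t0 phi1 t1 by auto
    have "ln (P_CH n t \<phi>) = ln ((\<phi> / t) powr (real n * t)) + ln (((1 - \<phi>) / (1 - t)) powr (real n * (1 - t)))"
    proof -
      have "P_CH n t \<phi> = (\<phi> / t) powr (real n * t) * ((1 - \<phi>) / (1 - t)) powr (real n * (1 - t))"
        unfolding P_CH_def using phit by simp
      moreover have "(\<phi> / t) powr (real n * t) > 0" "((1 - \<phi>) / (1 - t)) powr (real n * (1 - t)) > 0"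
        using p1 by auto
      ultimately show ?thesis by (simp only: ln_mult_pos)
    qed
    also have "\<dots> = real k * ln (\<phi> / t) + real m * ln ((1 - \<phi>) / (1 - t))"
      unfolding tk tm by simp
    also have "ln (\<phi> / t) = Lp - Lk + Ln" unfolding q1 Lp_def Lk_def Ln_def
      using phi0 np kp by (simp add: ln_div ln_mult_pos)
    also have "ln ((1 - \<phi>) / (1 - t)) = Lq - Lm + Ln" unfolding q2 Lq_def Lm_def Ln_def
      using phi1 np kp by (simp add: ln_div ln_mult_pos)
    finally show ?thesis .
  qed
  have LK: "ln ((1 - \<phi>) / (t - \<phi>) * sqrt (t / (2 * pi * (1 - t)))) = Lq - Lx + Ln + Lk/2 - ln 2/2 - ln pi/2 - Lm/2"
  proof -
    have q1: "(1 - \<phi>) / (t - \<phi>) = (1 - \<phi>) * real n / x" unfolding xt using np by simp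
    have q2: "t / (2 * pi * (1 - t)) = real k / (2 * pi * real m)"
    proof -
      have "t / (2 * pi * (1 - t)) = (real n * t) / (2 * pi * (real n * (1 - t)))" using np by simp
      thus ?thesis unfolding tk tm .
    qed
    have "ln ((1 - \<phi>) / (t - \<phi>) * sqrt (t / (2 * pi * (1 - t)))) = ln ((1 - \<phi>) / (t - \<phi>)) + ln (sqrt (t / (2 * pi * (1 - t))))"
      using phi1 phit t0 t1 by (intro ln_mult_pos) auto
    also have "ln ((1 - \<phi>) / (t - \<phi>)) = Lq + Ln - Lx" unfolding q1 Lq_def Ln_def Lx_def
      using phi1 np xp by (simp add: ln_div ln_mult_pos)
    also have "ln (sqrt (t / (2 * pi * (1 - t)))) = ln (t / (2 * pi * (1 - t))) / 2"
      using t0 t1 by (simp add: ln_sqrt)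
    also have "ln (t / (2 * pi * (1 - t))) = Lk - ln 2 - ln pi - Lm" unfolding q2 Lk_def Lm_def
      using kp by (simp add: ln_div ln_mult_pos)
    finally have "ln ((1 - \<phi>) / (t - \<phi>) * sqrt (t / (2 * pi * (1 - t)))) = Lq + Ln - Lx + (Lk - ln 2 - ln pi - Lm) / 2" .
    moreover have "(Lk - ln 2 - ln pi - Lm) / 2 = Lk/2 - ln 2/2 - ln pi/2 - Lm/2" by (simp add: diff_divide_distrib)
    ultimately show ?thesis by linarith
  qed
  have LT': "ln (P_CH n t \<phi>) = real k * Lp - real k * Lk + real k * Ln + real m * Lq - real m * Lm + real m * Ln"
    unfolding LT by (simp add: algebra_simps)
  have lnn: "ln (real n) = Ln" by (simp add: Ln_def)
  have nsum': "real n = real k + real m" using rm by simp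
  have nsum: "real n * Ln = real k * Ln + real m * Ln" by (subst nsum') (rule distrib_right)
  have part1: "C - lE n t \<phi> / (real n * (t - \<phi>)) \<le> - ln T"
  proof -
    have "T \<le> A / x" using TU xp by (simp add: field_simps)
    hence "ln T \<le> ln (A / x)" using Tp by simp
    also have "ln (A / x) = ln A - Lx" using Ap xp by (simp add: ln_div Lx_def)
    finally have lT: "ln T \<le> ln A - Lx" .
    have lE: "1/(12*real n) \<le> lE n t \<phi> / (real n * (t - \<phi>))"
    proof -
      have d: "real n * (t - \<phi>) > 0" using np phit by simp
      have "(t - \<phi>)/12 \<le> lE n t \<phi>"
      proof -
        have pq: "\<phi> * (1 - \<phi>) \<le> 1/4"
        proof -
          have "0 \<le> (\<phi> - 1/2)^2" by simp
          thus ?thesis by (simp add: power2_eq_square algebra_simps)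
        qed
        have pqp: "\<phi> * (1 - \<phi>) > 0" using phi0 phi1 by simp
        have "1 \<le> pi * real n / (8 * \<phi> * (1 - \<phi>))"
        proof -
          have "8 * \<phi> * (1 - \<phi>) \<le> 2" using pq by simp
          also have "2 \<le> pi * real n"
          proof -
            have "pi * 1 \<le> pi * real n" using n1 by (intro mult_left_mono) auto
            thus ?thesis using pi_gt3 by linarith
          qed
          finally show ?thesis using pqp by (simp add: field_simps)
        qed
        hence "1 \<le> sqrt (pi * real n / (8 * \<phi> * (1 - \<phi>)))" by simp
        hence "(t - \<phi>) * 1 \<le> (t - \<phi>) * sqrt (pi * real n / (8 * \<phi> * (1 - \<phi>)))"
          using phit by (intro mult_left_mono) auto
        moreover have "(t - \<phi>)/12 \<le> 1" using phit t1 phi0 by simp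
        moreover have "(t - \<phi>)/12 \<le> (t - \<phi>) * 1" using phit by simp
        ultimately show ?thesis unfolding lE_def by (intro min.boundedI) linarith+
      qed
      hence "(t - \<phi>)/12 / (real n * (t - \<phi>)) \<le> lE n t \<phi> / (real n * (t - \<phi>))"
        using d by (intro divide_right_mono) auto
      moreover have "(t - \<phi>)/12 / (real n * (t - \<phi>)) = 1/(12*real n)" using phit np by (simp add: field_simps)
      ultimately show ?thesis by simp
    qed
    show ?thesis unfolding C_def LT' LK lnn using lT LA La ek em en lE nsum nsum' by linarith
  qed
  have part2: "- ln T \<le> C + (\<phi> * (1 - \<phi>) / ((t - \<phi>)^2 * real n) + 1 / (12 * real n * t * (1 - t)))"
  proof -
    have pos: "A * x / (x^2 + s) > 0" using Ap xp sp by (simp add: add_pos_nonneg)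
    have "ln (A * x / (x^2 + s)) \<le> ln T" using TL pos Tp by simp
    moreover have "ln (A * x / (x^2 + s)) = ln A + Lx - ln (x^2 + s)"
    proof -
      have d: "x^2 + s > 0" using xp sp by (simp add: add_pos_nonneg)
      have "ln (A * x / (x^2 + s)) = ln (A * x) - ln (x^2 + s)" using Ap xp d by (intro ln_divide_pos) auto
      also have "ln (A * x) = ln A + ln x" using Ap xp by (intro ln_mult_pos) auto
      finally show ?thesis by (simp add: Lx_def)
    qed
    moreover have "ln (x^2 + s) \<le> 2 * Lx + s / x^2"
    proof -
      have "x^2 + s = x^2 * (1 + s/x^2)" using xp by (simp add: field_simps)
      hence "ln (x^2 + s) = ln (x^2) + ln (1 + s/x^2)" using xp sp by (simp add: ln_mult_pos add_pos_nonneg)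
      moreover have "ln (x^2) = 2 * Lx" unfolding Lx_def by (simp add: ln_realpow)
      moreover have "ln (1 + s/x^2) \<le> s/x^2" using sp xp by (intro ln_add_one_self_le_self) simp
      ultimately show ?thesis by simp
    qed
    moreover have "s / x^2 = \<phi> * (1 - \<phi>) / ((t - \<phi>)^2 * real n)"
    proof -
      have g: "\<And>N P D::real. N \<noteq> 0 \<Longrightarrow> D \<noteq> 0 \<Longrightarrow> N*P/((N*D)^2) = P/(D^2*N)"
        by (simp add: field_simps power2_eq_square)
      show ?thesis unfolding s_def xt mult.assoc using g[of "real n" "t - \<phi>" "\<phi> * (1 - \<phi>)"] np phit by simp
    qed
    moreover have "1/(12*real k) + 1/(12*real m) = 1 / (12 * real n * t * (1 - t))"
    proof -
      have "1 / (12 * real n * t * (1 - t)) = real n / (12 * (real n * t) * (real n * (1 - t)))"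
      proof -
        have g: "\<And>N t u::real. N \<noteq> 0 \<Longrightarrow> t \<noteq> 0 \<Longrightarrow> u \<noteq> 0 \<Longrightarrow> 1 / (12 * N * t * u) = N / (12 * (N * t) * (N * u))"
          by (simp add: field_simps)
        show ?thesis using g[of "real n" t "1 - t"] np t0 t1 by simp
      qed
      also have "\<dots> = (real k + real m) / (12 * real k * real m)" unfolding tk tm nsum'[symmetric] ..
      also have "\<dots> = 1/(12*real k) + 1/(12*real m)" using kp by (simp add: field_simps)
      finally show ?thesis by simp
    qed
    ultimately show ?thesis unfolding C_def LT' LK lnn using LA La ek em en nsum nsum' by linarith
  qed
  show ?thesis unfolding PX using part1 part2 by blast
qed

end
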